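(* If $G$ is a (finite, simple, connected) block graph, then $\mathrm{mob}(G)=\omega(G)$.
   Context: A block graph is a connected graph in which every block (maximal 2-connected subgraph or bridge) is a complete graph. $\omega(G)$ is the clique number. A set $S$ of vertices is a general position set if no three distinct vertices of $S$ lie on a common shortest path. Place one robot on each vertex of a general position set $S$; robots move one at a time, and a move is legal if a robot moves to an adjacent unoccupied vertex and the new set of occupied vertices is again a general position set. $S$ is a mobile general position set if some finite sequence of legal moves results in every vertex of $G$ being occupied by some robot at some moment. $\mathrm{mob}(G)$ is the maximum cardinality of a mobile general position set of $G$. *)

theory Defs
  imports Main
begin

definition simple_graph :: "'a set \<Rightarrow> ('a \<Rightarrow> 'a \<Rightarrow> bool) \<Rightarrow> bool" where
  "simple_graph V E \<longleftrightarrow> finite V \<and> (\<forall>u v. E u v \<longrightarrow> u \<in> V \<and> v \<in> V)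
     \<and> (\<forall>u v. E u v \<longrightarrow> E v u) \<and> (\<forall>u. \<not> E u u)"

definition walk_in :: "'a set \<Rightarrow> ('a \<Rightarrow> 'a \<Rightarrow> bool) \<Rightarrow> 'a list \<Rightarrow> bool" where
  "walk_in W E p \<longleftrightarrow> p \<noteq> [] \<and> set p \<subseteq> W \<and> (\<forall>i. Suc i < length p \<longrightarrow> E (p ! i) (p ! Suc i))"

definition connected_on :: "'a set \<Rightarrow> ('a \<Rightarrow> 'a \<Rightarrow> bool) \<Rightarrow> bool" where
  "connected_on W E \<longleftrightarrow> (\<forall>u\<in>W. \<forall>v\<in>W. \<exists>p. walk_in W E p \<and> hd p = u \<and> last p = v)"

definition connected_graph :: "'a set \<Rightarrow> ('a \<Rightarrow> 'a \<Rightarrow> bool) \<Rightarrow> bool" where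
  "connected_graph V E \<longleftrightarrow> simple_graph V E \<and> V \<noteq> {} \<and> connected_on V E"

definition shortest_path :: "'a set \<Rightarrow> ('a \<Rightarrow> 'a \<Rightarrow> bool) \<Rightarrow> 'a list \<Rightarrow> bool" where
  "shortest_path V E p \<longleftrightarrow> walk_in V E p \<and>
     (\<forall>q. walk_in V E q \<and> hd q = hd p \<and> last q = last p \<longrightarrow> length p \<le> length q)"

definition gp_set :: "'a set \<Rightarrow> ('a \<Rightarrow> 'a \<Rightarrow> bool) \<Rightarrow> 'a set \<Rightarrow> bool" where
  "gp_set V E S \<longleftrightarrow> S \<subseteq> V \<and>
     \<not> (\<exists>x\<in>S. \<exists>y\<in>S. \<exists>z\<in>S. x \<noteq> y \<and> y \<noteq> z \<and> x \<noteq> z \<and>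
          (\<exists>p. shortest_path V E p \<and> x \<in> set p \<and> y \<in> set p \<and> z \<in> set p))"

definition legal_move :: "'a set \<Rightarrow> ('a \<Rightarrow> 'a \<Rightarrow> bool) \<Rightarrow> 'a set \<Rightarrow> 'a set \<Rightarrow> bool" where
  "legal_move V E S S' \<longleftrightarrow> (\<exists>u v. u \<in> S \<and> v \<notin> S \<and> E u v \<and> S' = insert v (S - {u})
     \<and> gp_set V E S')"

definition mobile_gp_set :: "'a set \<Rightarrow> ('a \<Rightarrow> 'a \<Rightarrow> bool) \<Rightarrow> 'a set \<Rightarrow> bool" where
  "mobile_gp_set V E S \<longleftrightarrow> gp_set V E S \<and>
     (\<exists>cs. cs \<noteq> [] \<and> hd cs = S \<and>
        (\<forall>i. Suc i < length cs \<longrightarrow> legal_move V E (cs ! i) (cs ! Suc i)) \<and>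
        V \<subseteq> \<Union> (set cs))"

definition mob :: "'a set \<Rightarrow> ('a \<Rightarrow> 'a \<Rightarrow> bool) \<Rightarrow> nat" where
  "mob V E = Max {card S | S. mobile_gp_set V E S}"

definition is_clique :: "'a set \<Rightarrow> ('a \<Rightarrow> 'a \<Rightarrow> bool) \<Rightarrow> 'a set \<Rightarrow> bool" where
  "is_clique V E K \<longleftrightarrow> K \<subseteq> V \<and> (\<forall>u\<in>K. \<forall>v\<in>K. u \<noteq> v \<longrightarrow> E u v)"

definition clique_number :: "'a set \<Rightarrow> ('a \<Rightarrow> 'a \<Rightarrow> bool) \<Rightarrow> nat" where
  "clique_number V E = Max {card K | K. is_clique V E K}"

(* vertex sets of connected subgraphs with at least two vertices and no cut vertex:
   these are the vertex sets of edges (K2) and of 2-connected subgraphs *)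
definition nonseparable :: "'a set \<Rightarrow> ('a \<Rightarrow> 'a \<Rightarrow> bool) \<Rightarrow> 'a set \<Rightarrow> bool" where
  "nonseparable V E B \<longleftrightarrow> B \<subseteq> V \<and> 2 \<le> card B \<and> connected_on B E \<and>
     (\<forall>x\<in>B. connected_on (B - {x}) E)"

(* a block: maximal 2-connected subgraph or bridge (given by its vertex set; blocks are induced) *)
definition is_block :: "'a set \<Rightarrow> ('a \<Rightarrow> 'a \<Rightarrow> bool) \<Rightarrow> 'a set \<Rightarrow> bool" where
  "is_block V E B \<longleftrightarrow> nonseparable V E B \<and> (\<forall>B'. nonseparable V E B' \<and> B \<subseteq> B' \<longrightarrow> B' = B)"

definition block_graph :: "'a set \<Rightarrow> ('a \<Rightarrow> 'a \<Rightarrow> bool) \<Rightarrow> bool" where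
  "block_graph V E \<longleftrightarrow> connected_graph V E \<and> (\<forall>B. is_block V E B \<longrightarrow> is_clique V E B)"

end

theory Submission
  imports Defs
begin

lemma chain_succ:
  "(\<forall>i. Suc i < length xs \<longrightarrow> R (xs!i) (xs!Suc i)) \<longleftrightarrow> successively R xs"
proof (induction xs)
  case Nil then show ?case by simp
next
  case (Cons x xs)
  show ?case
  proof (cases xs)
    case Nil then show ?thesis by simp
  next
    case (Cons y ys)
    have "(\<forall>i. Suc i < length (x#xs) \<longrightarrow> R ((x#xs)!i) ((x#xs)!Suc i)) \<longleftrightarrow>
          R x y \<and> (\<forall>i. Suc i < length xs \<longrightarrow> R (xs!i) (xs!Suc i))"
    proof
      assume H: "\<forall>i. Suc i < length (x#xs) \<longrightarrow> R ((x#xs)!i) ((x#xs)!Suc i)"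
      show "R x y \<and> (\<forall>i. Suc i < length xs \<longrightarrow> R (xs!i) (xs!Suc i))"
      proof
        show "R x y" using H[rule_format, of 0] Cons by simp
        show "\<forall>i. Suc i < length xs \<longrightarrow> R (xs!i) (xs!Suc i)"
          using H by (metis Suc_less_eq length_Cons nth_Cons_Suc)
      qed
    next
      assume H: "R x y \<and> (\<forall>i. Suc i < length xs \<longrightarrow> R (xs!i) (xs!Suc i))"
      show "\<forall>i. Suc i < length (x#xs) \<longrightarrow> R ((x#xs)!i) ((x#xs)!Suc i)"
      proof (intro allI impI)
        fix i assume "Suc i < length (x#xs)"
        then show "R ((x#xs)!i) ((x#xs)!Suc i)"
          using H Cons by (cases i) auto
      qed
    qed
    then show ?thesis using Cons.IH Cons by simp
  qed
qed

lemma walk_succ: "walk_in W E p \<longleftrightarrow> p \<noteq> [] \<and> set p \<subseteq> W \<and> successively E p"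
  unfolding walk_in_def chain_succ by simp

definition adjW :: "('a \<Rightarrow> 'a \<Rightarrow> bool) \<Rightarrow> 'a set \<Rightarrow> 'a \<Rightarrow> 'a \<Rightarrow> bool" where
  "adjW E W u v \<longleftrightarrow> E u v \<and> u \<in> W \<and> v \<in> W"

lemma W2R:
  assumes "walk_in W E p" "i \<le> l" "l < length p" "\<forall>m. i \<le> m \<and> m \<le> l \<longrightarrow> p!m \<in> U"
  shows "(adjW E U ^^ (l - i)) (p!i) (p!l)"
  using assms(2-4)
proof (induction l)
  case 0 then show ?case by simp
next
  case (Suc l)
  show ?case
  proof (cases "i = Suc l")
    case True then show ?thesis by simp
  next
    case False
    then have il: "i \<le> l" using Suc by simp
    have IH: "(adjW E U ^^ (l - i)) (p!i) (p!l)" using Suc il by simp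
    have "E (p!l) (p!Suc l)" using assms(1) Suc(3) unfolding walk_in_def by simp
    then have "adjW E U (p!l) (p!Suc l)" using Suc(4) il unfolding adjW_def by simp
    from relpowp_Suc_I[OF IH this] show ?thesis using il by (simp add: Suc_diff_le)
  qed
qed

lemma W2R':
  assumes "walk_in W E p" "i \<le> l" "l < length p"
  shows "(adjW E W ^^ (l - i)) (p!i) (p!l)"
proof -
  have "\<forall>m. i \<le> m \<and> m \<le> l \<longrightarrow> p!m \<in> W"
  proof (intro allI impI)
    fix m assume "i \<le> m \<and> m \<le> l"
    then have "p!m \<in> set p" using assms(3) by simp
    then show "p!m \<in> W" using assms(1) unfolding walk_in_def by blast
  qed
  then show ?thesis using W2R[OF assms] by blast
qed

lemma R2W:
  assumes "(adjW E W ^^ n) u v" "u \<in> W"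
  shows "\<exists>p. walk_in W E p \<and> hd p = u \<and> last p = v \<and> length p = Suc n"
  using assms
proof (induction n arbitrary: v)
  case 0 then show ?case by (intro exI[of _ "[u]"]) (simp add: walk_in_def)
next
  case (Suc n)
  from Suc.prems(1) obtain w where w: "(adjW E W ^^ n) u w" "adjW E W w v"
    by (rule relpowp_Suc_E)
  from Suc.IH[OF w(1) Suc.prems(2)] obtain p where
    p: "walk_in W E p" "hd p = u" "last p = w" "length p = Suc n" by blast
  have "walk_in W E (p @ [v])"
    using p w(2) unfolding walk_succ adjW_def
    by (auto simp: successively_append_iff)
  then show ?case using p by (intro exI[of _ "p @ [v]"]) (auto simp: walk_in_def hd_append)
qed

lemma walk_rtr:
  assumes "walk_in W E p"
  shows "(adjW E W)\<^sup>*\<^sup>* (hd p) (last p)"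
proof -
  have ne: "p \<noteq> []" using assms unfolding walk_in_def by simp
  have allin: "\<forall>m. 0 \<le> m \<and> m \<le> length p - 1 \<longrightarrow> p!m \<in> W"
  proof (intro allI impI)
    fix m assume "0 \<le> m \<and> m \<le> length p - 1"
    then have "m < length p" using ne by (cases p) auto
    then have "p!m \<in> set p" by simp
    then show "p!m \<in> W" using assms unfolding walk_in_def by blast
  qed
  have "(adjW E W ^^ (length p - 1 - 0)) (p!0) (p!(length p - 1))"
    using W2R[OF assms _ _ allin] ne by simp
  then have "(adjW E W)\<^sup>*\<^sup>* (p!0) (p!(length p - 1))" by (simp add: relpowp_imp_rtranclp)
  then show ?thesis using ne by (metis hd_conv_nth last_conv_nth)
qed

lemma conn_iff: "connected_on W E \<longleftrightarrow> (\<forall>u\<in>W. \<forall>v\<in>W. (adjW E W)\<^sup>*\<^sup>* u v)"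
proof
  assume "connected_on W E"
  then have H: "\<forall>u\<in>W. \<forall>v\<in>W. \<exists>p. walk_in W E p \<and> hd p = u \<and> last p = v"
    unfolding connected_on_def by blast
  show "\<forall>u\<in>W. \<forall>v\<in>W. (adjW E W)\<^sup>*\<^sup>* u v"
  proof (intro ballI)
    fix u v assume "u \<in> W" "v \<in> W"
    then obtain p where p: "walk_in W E p" "hd p = u" "last p = v" using H by blast
    show "(adjW E W)\<^sup>*\<^sup>* u v" using walk_rtr[OF p(1)] p(2,3) by simp
  qed
next
  assume H: "\<forall>u\<in>W. \<forall>v\<in>W. (adjW E W)\<^sup>*\<^sup>* u v"
  show "connected_on W E" unfolding connected_on_def
  proof (intro ballI)
    fix u v assume "u \<in> W" "v \<in> W"
    then have "(adjW E W)\<^sup>*\<^sup>* u v" using H by simp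
    then obtain n where "(adjW E W ^^ n) u v" using rtranclp_imp_relpowp[of "adjW E W" u v] by auto
    from R2W[OF this \<open>u \<in> W\<close>] obtain p where "walk_in W E p" "hd p = u" "last p = v"
      by blast
    then show "\<exists>p. walk_in W E p \<and> hd p = u \<and> last p = v" by blast
  qed
qed

lemma adjW_mono: "W \<subseteq> W' \<Longrightarrow> (adjW E W)\<^sup>*\<^sup>* u v \<Longrightarrow> (adjW E W')\<^sup>*\<^sup>* u v"
proof -
  assume "W \<subseteq> W'"
  then have "adjW E W \<le> adjW E W'" unfolding adjW_def by auto
  then show "(adjW E W)\<^sup>*\<^sup>* u v \<Longrightarrow> (adjW E W')\<^sup>*\<^sup>* u v" using rtranclp_mono[of "adjW E W" "adjW E W'"] by blast
qed

lemma rtr_in: "(adjW E W)\<^sup>*\<^sup>* u v \<Longrightarrow> u \<noteq> v \<Longrightarrow> v \<in> W"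
  by (induction rule: rtranclp_induct) (auto simp: adjW_def)



lemma list_of_rtr:
  assumes "R\<^sup>*\<^sup>* a b"
  shows "\<exists>cs. cs \<noteq> [] \<and> hd cs = a \<and> last cs = b \<and> successively R cs \<and> b \<in> set cs"
  using assms
proof (induction rule: rtranclp_induct)
  case base then show ?case by (intro exI[of _ "[a]"]) simp
next
  case (step y z)
  then obtain cs where cs: "cs \<noteq> []" "hd cs = a" "last cs = y" "successively R cs" by blast
  have "successively R (cs @ [z])" using cs step(2) by (simp add: successively_append_iff)
  then show ?case using cs by (intro exI[of _ "cs @ [z]"]) (simp add: hd_append)
qed

lemma join:
  assumes "successively R xs" "successively R ys" "xs \<noteq> []" "ys \<noteq> []" "last xs = hd ys"
  shows "successively R (xs @ tl ys) \<and> xs @ tl ys \<noteq> [] \<and> hd (xs @ tl ys) = hd xs \<and>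
         last (xs @ tl ys) = last ys \<and> set (xs @ tl ys) = set xs \<union> set ys"
proof -
  obtain y ys' where ys: "ys = y # ys'" using assms(4) by (cases ys) auto
  show ?thesis
  proof (cases "ys' = []")
    case True
    then show ?thesis using assms ys by (auto simp: hd_append)
  next
    case False
    have "successively R ys'" "R y (hd ys')" using assms(2) ys False by (auto simp: successively_Cons)
    then have "successively R (xs @ ys')" using assms(1,5) ys by (simp add: successively_append_iff)
    moreover have "set xs \<union> set ys = set xs \<union> set ys'"
    proof -
      have "y \<in> set xs" using last_in_set[OF assms(3)] assms(5) ys by simp
      then show ?thesis using ys by auto
    qed
    ultimately show ?thesis using ys False assms(3) by (auto simp: hd_append)
  qed
qed

locale cg =
  fixes V :: "'a set" and E :: "'a \<Rightarrow> 'a \<Rightarrow> bool"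
  assumes cg: "connected_graph V E"
begin

lemma finV: "finite V" using cg unfolding connected_graph_def simple_graph_def by simp
lemma Vne: "V \<noteq> {}" using cg unfolding connected_graph_def by simp
lemma Esym: "E u v \<Longrightarrow> E v u" using cg unfolding connected_graph_def simple_graph_def by blast
lemma EV1: "E u v \<Longrightarrow> u \<in> V" using cg unfolding connected_graph_def simple_graph_def by blast
lemma EV2: "E u v \<Longrightarrow> v \<in> V" using cg unfolding connected_graph_def simple_graph_def by blast
lemma Eirr: "\<not> E u u" using cg unfolding connected_graph_def simple_graph_def by blast
lemma Ene: "E u v \<Longrightarrow> u \<noteq> v" using Eirr by blast
lemma connV: "u \<in> V \<Longrightarrow> v \<in> V \<Longrightarrow> (adjW E V)\<^sup>*\<^sup>* u v"
  using cg unfolding connected_graph_def conn_iff by blast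

lemma adjW_sym: "adjW E W u v \<Longrightarrow> adjW E W v u"
  unfolding adjW_def using Esym by blast

lemma rtr_sym: "(adjW E W)\<^sup>*\<^sup>* u v \<Longrightarrow> (adjW E W)\<^sup>*\<^sup>* v u"
proof (induction rule: rtranclp_induct)
  case base then show ?case by simp
next
  case (step y z)
  have "adjW E W z y" using adjW_sym[OF step(2)] .
  then show ?case using step(3) by (rule converse_rtranclp_into_rtranclp)
qed

lemma rtr_trans: "(adjW E W)\<^sup>*\<^sup>* u v \<Longrightarrow> (adjW E W)\<^sup>*\<^sup>* v w \<Longrightarrow> (adjW E W)\<^sup>*\<^sup>* u w"
  by (rule rtranclp_trans)

lemma rp_sym: "(adjW E W ^^ n) u v \<Longrightarrow> (adjW E W ^^ n) v u"
proof (induction n arbitrary: v)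
  case 0 then show ?case by simp
next
  case (Suc n)
  from Suc.prems obtain w where w: "(adjW E W ^^ n) u w" "adjW E W w v" by (rule relpowp_Suc_E)
  have "(adjW E W ^^ n) w u" using Suc.IH[OF w(1)] .
  from relpowp_Suc_I2[OF adjW_sym[OF w(2)] this] show ?case .
qed

definition d :: "'a \<Rightarrow> 'a \<Rightarrow> nat" where
  "d u v = (LEAST n. (adjW E V ^^ n) u v)"

lemma d_rel: assumes "u \<in> V" "v \<in> V" shows "(adjW E V ^^ d u v) u v"
proof -
  have "(adjW E V)\<^sup>*\<^sup>* u v" using connV[OF assms] .
  then obtain n where "(adjW E V ^^ n) u v" using rtranclp_imp_relpowp[of "adjW E V" u v] by auto
  then show ?thesis unfolding d_def by (rule LeastI)
qed

lemma d_le: "(adjW E V ^^ n) u v \<Longrightarrow> d u v \<le> n"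
  unfolding d_def by (rule Least_le)

lemma d_sym: assumes "u \<in> V" "v \<in> V" shows "d u v = d v u"
proof -
  have "d v u \<le> d u v" using d_le[OF rp_sym[OF d_rel[OF assms]]] .
  moreover have "d u v \<le> d v u" using d_le[OF rp_sym[OF d_rel[OF assms(2,1)]]] .
  ultimately show ?thesis by simp
qed

lemma d_tri: assumes "u \<in> V" "v \<in> V" "w \<in> V" shows "d u w \<le> d u v + d v w"
proof -
  have "(adjW E V ^^ (d u v + d v w)) u w"
    using relpowp_trans[OF d_rel[OF assms(1,2)] d_rel[OF assms(2,3)]] .
  then show ?thesis by (rule d_le)
qed

lemma d_refl: "d u u = 0"
proof -
  have "(adjW E V ^^ 0) u u" by simp
  then show ?thesis using d_le[of 0 u u] by simp
qed

lemma d_0: assumes "u \<in> V" "v \<in> V" "d u v = 0" shows "u = v"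
  using d_rel[OF assms(1,2)] assms(3) by simp

lemma d_E: assumes "E u v" shows "d u v = 1"
proof -
  have "adjW E V u v" using assms EV1 EV2 unfolding adjW_def by blast
  then have "(adjW E V ^^ Suc 0) u v" by (rule relpowp_Suc_I[OF relpowp_0_I])
  then have "d u v \<le> 1" using d_le by fastforce
  moreover have "d u v \<noteq> 0" using d_0[OF EV1[OF assms] EV2[OF assms]] Ene[OF assms] by blast
  ultimately show ?thesis by simp
qed

lemma d_edge: assumes "s \<in> V" "E u v" shows "d s v \<le> d s u + 1"
  using d_tri[OF assms(1) EV1[OF assms(2)] EV2[OF assms(2)]] d_E[OF assms(2)] by simp

lemma path_avoid:
  assumes "(adjW E V ^^ n) s y" "d s y = n" "s \<in> V"
  shows "(adjW E {w\<in>V. w = y \<or> d s w < n})\<^sup>*\<^sup>* s y"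
  using assms(1,2)
proof (induction n arbitrary: y)
  case 0 then show ?case by simp
next
  case (Suc n)
  from Suc.prems(1) obtain w where w: "(adjW E V ^^ n) s w" "adjW E V w y" by (rule relpowp_Suc_E)
  have wV: "w \<in> V" and yV: "y \<in> V" and Ewy: "E w y" using w(2) unfolding adjW_def by auto
  have "d s w \<le> n" using d_le[OF w(1)] .
  moreover have "d s y \<le> d s w + 1" using d_edge[OF assms(3) Ewy] .
  ultimately have dw: "d s w = n" using Suc.prems(2) by simp
  have IH: "(adjW E {w'\<in>V. w' = w \<or> d s w' < n})\<^sup>*\<^sup>* s w" using Suc.IH[OF w(1) dw] .
  have sub: "{w'\<in>V. w' = w \<or> d s w' < n} \<subseteq> {w'\<in>V. w' = y \<or> d s w' < Suc n}"
    using dw wV by auto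
  have A: "(adjW E {w'\<in>V. w' = y \<or> d s w' < Suc n})\<^sup>*\<^sup>* s w" using adjW_mono[OF sub IH] .
  have B: "adjW E {w'\<in>V. w' = y \<or> d s w' < Suc n} w y"
    using Ewy wV yV dw unfolding adjW_def by auto
  show ?case using rtranclp.rtrancl_into_rtrancl[OF A B] .
qed

lemma pred:
  assumes "s \<in> V" "c \<in> V" "d s c = Suc m"
  shows "\<exists>b. E b c \<and> b \<in> V \<and> d s b = m \<and> (adjW E {w\<in>V. w = b \<or> d s w < m})\<^sup>*\<^sup>* s b"
proof -
  have "(adjW E V ^^ Suc m) s c" using d_rel[OF assms(1,2)] assms(3) by simp
  then obtain b where b: "(adjW E V ^^ m) s b" "adjW E V b c" by (rule relpowp_Suc_E)
  have bV: "b \<in> V" and Ebc: "E b c" using b(2) unfolding adjW_def by auto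
  have "d s b \<le> m" using d_le[OF b(1)] .
  moreover have "d s c \<le> d s b + 1" using d_edge[OF assms(1) Ebc] .
  ultimately have db: "d s b = m" using assms(3) by simp
  show ?thesis using Ebc bV db path_avoid[OF b(1) db assms(1)] by blast
qed


lemma walk_nth_V: "walk_in W E p \<Longrightarrow> i < length p \<Longrightarrow> p!i \<in> W"
  unfolding walk_in_def by (meson nth_mem subsetD)

lemma shortest_exists:
  assumes "u \<in> V" "v \<in> V"
  shows "\<exists>p. shortest_path V E p \<and> hd p = u \<and> last p = v \<and> length p = Suc (d u v)"
proof -
  obtain p where p: "walk_in V E p" "hd p = u" "last p = v" "length p = Suc (d u v)"
    using R2W[OF d_rel[OF assms] assms(1)] by blast
  have "length p \<le> length q" if q: "walk_in V E q" "hd q = hd p" "last q = last p" for q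
  proof -
    have ne: "q \<noteq> []" using q(1) unfolding walk_in_def by simp
    have "(adjW E V ^^ (length q - 1 - 0)) (q!0) (q!(length q - 1))"
      using W2R'[OF q(1), of 0 "length q - 1"] ne by simp
    then have "(adjW E V ^^ (length q - 1)) u v" using q(2,3) p(2,3) ne
      by (simp add: hd_conv_nth last_conv_nth)
    then have "d u v \<le> length q - 1" by (rule d_le)
    then show ?thesis using p(4) ne by (cases q) auto
  qed
  then show ?thesis using p unfolding shortest_path_def by blast
qed

lemma sp_index:
  assumes sp: "shortest_path V E q" and il: "i \<le> l" "l < length q"
  shows "d (q!i) (q!l) = l - i"
proof -
  have w: "walk_in V E q" using sp unfolding shortest_path_def by simp
  have ne: "q \<noteq> []" using w unfolding walk_in_def by simp
  have r: "(adjW E V ^^ (l - i)) (q!i) (q!l)"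
    using W2R'[OF w il] .
  then have le: "d (q!i) (q!l) \<le> l - i" by (rule d_le)
  have "\<not> d (q!i) (q!l) < l - i"
  proof
    assume lt: "d (q!i) (q!l) < l - i"
    have qiV: "q!i \<in> V" and qlV: "q!l \<in> V" using walk_nth_V[OF w] il by auto
    have r1: "(adjW E V ^^ (i - 0)) (q!0) (q!i)"
      using W2R'[OF w, of 0 i] il by simp
    have r2: "(adjW E V ^^ (length q - 1 - l)) (q!l) (q!(length q - 1))"
      using W2R'[OF w, of l "length q - 1"] il by simp
    have "(adjW E V ^^ (i - 0 + d (q!i) (q!l) + (length q - 1 - l))) (q!0) (q!(length q - 1))"
      using relpowp_trans[OF relpowp_trans[OF r1 d_rel[OF qiV qlV]] r2] .
    then have "(adjW E V ^^ (i + d (q!i) (q!l) + (length q - 1 - l))) (hd q) (last q)"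
      using ne by (simp add: hd_conv_nth last_conv_nth)
    moreover have "hd q \<in> V" using walk_nth_V[OF w, of 0] ne by (simp add: hd_conv_nth)
    ultimately have "\<exists>p. walk_in V E p \<and> hd p = hd q \<and> last p = last q \<and>
      length p = Suc (i + d (q!i) (q!l) + (length q - 1 - l))" by (rule R2W)
    then obtain p where p: "walk_in V E p" "hd p = hd q" "last p = last q"
      "length p = Suc (i + d (q!i) (q!l) + (length q - 1 - l))" by blast
    then have "length q \<le> length p" using sp unfolding shortest_path_def by blast
    then show False using p(4) lt il by simp
  qed
  then show ?thesis using le by simp
qed

lemma sp_betw:
  assumes sp: "shortest_path V E q" and "i < j" "j < l" "l < length q"
  shows "d (q!i) (q!l) = d (q!i) (q!j) + d (q!j) (q!l)"
  using sp_index[OF sp, of i l] sp_index[OF sp, of i j] sp_index[OF sp, of j l] assms by simp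

lemma gp_crit:
  assumes SV: "S \<subseteq> V"
    and H: "\<And>u v w. u \<in> S \<Longrightarrow> v \<in> S \<Longrightarrow> w \<in> S \<Longrightarrow> u \<noteq> v \<Longrightarrow> v \<noteq> w \<Longrightarrow> u \<noteq> w
             \<Longrightarrow> d u w \<noteq> d u v + d v w"
  shows "gp_set V E S"
  unfolding gp_set_def
proof (intro conjI SV notI)
  assume "\<exists>x\<in>S. \<exists>y\<in>S. \<exists>z\<in>S. x \<noteq> y \<and> y \<noteq> z \<and> x \<noteq> z \<and>
          (\<exists>p. shortest_path V E p \<and> x \<in> set p \<and> y \<in> set p \<and> z \<in> set p)"
  then obtain x y z q where xyz: "x \<in> S" "y \<in> S" "z \<in> S" "x \<noteq> y" "y \<noteq> z" "x \<noteq> z"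
    and sp: "shortest_path V E q" and m: "x \<in> set q" "y \<in> set q" "z \<in> set q" by blast
  obtain a where a: "a < length q" "q!a = x" using m(1) by (auto simp: in_set_conv_nth)
  obtain b where b: "b < length q" "q!b = y" using m(2) by (auto simp: in_set_conv_nth)
  obtain c where c: "c < length q" "q!c = z" using m(3) by (auto simp: in_set_conv_nth)
  have ab: "a \<noteq> b" "b \<noteq> c" "a \<noteq> c" using a b c xyz by auto
  have key: "\<And>i j l. i < j \<Longrightarrow> j < l \<Longrightarrow> l < length q \<Longrightarrow> q!i \<in> S \<Longrightarrow> q!j \<in> S \<Longrightarrow> q!l \<in> S
     \<Longrightarrow> q!i \<noteq> q!j \<Longrightarrow> q!j \<noteq> q!l \<Longrightarrow> q!i \<noteq> q!l \<Longrightarrow> False"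
  proof -
    fix i j l assume A: "i < j" "j < l" "l < length q" "q!i \<in> S" "q!j \<in> S" "q!l \<in> S"
      "q!i \<noteq> q!j" "q!j \<noteq> q!l" "q!i \<noteq> q!l"
    have "d (q!i) (q!l) \<noteq> d (q!i) (q!j) + d (q!j) (q!l)" using H[OF A(4-9)] .
    then show False using sp_betw[OF sp A(1-3)] by simp
  qed
  consider "a < b" "b < c" | "a < c" "c < b" | "b < a" "a < c" | "b < c" "c < a"
    | "c < a" "a < b" | "c < b" "b < a"
    using ab by linarith
  then show False
  proof cases
    case 1 then show ?thesis using key[of a b c] a b c xyz by auto
  next
    case 2 then show ?thesis using key[of a c b] a b c xyz by auto
  next
    case 3 then show ?thesis using key[of b a c] a b c xyz by auto
  next
    case 4 then show ?thesis using key[of b c a] a b c xyz by auto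
  next
    case 5 then show ?thesis using key[of c a b] a b c xyz by auto
  next
    case 6 then show ?thesis using key[of c b a] a b c xyz by auto
  qed
qed

lemma gp_sep:
  assumes gp: "gp_set V E S" and "x \<in> S" "s \<in> S" "t \<in> S" "s \<noteq> x" "t \<noteq> x"
  shows "(adjW E (V - {x}))\<^sup>*\<^sup>* s t"
proof (cases "s = t")
  case True then show ?thesis by simp
next
  case False
  have SV: "S \<subseteq> V" using gp unfolding gp_set_def by simp
  obtain q where q: "shortest_path V E q" "hd q = s" "last q = t"
    using shortest_exists[of s t] SV assms by blast
  have w: "walk_in V E q" using q(1) unfolding shortest_path_def by simp
  have ne: "q \<noteq> []" using w unfolding walk_in_def by simp
  show ?thesis
  proof (cases "x \<in> set q")
    case True
    have "s \<in> set q" "t \<in> set q" using q(2,3) ne by auto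
    then show ?thesis using gp True q(1) assms False unfolding gp_set_def by blast
  next
    case False
    then have "walk_in (V - {x}) E q" using w unfolding walk_in_def by auto
    from walk_rtr[OF this] show ?thesis using q(2,3) by simp
  qed
qed

end


lemma rtr_walk_seg:
  assumes "walk_in W E p" "i \<le> l" "l < length p" "\<forall>m. i \<le> m \<and> m \<le> l \<longrightarrow> p!m \<in> U"
  shows "(adjW E U)\<^sup>*\<^sup>* (p!i) (p!l)"
  using relpowp_imp_rtranclp[OF W2R[OF assms]] .

locale bg = cg +
  assumes blk: "\<And>B. is_block V E B \<Longrightarrow> is_clique V E B"
begin

lemma nonsep_clique:
  assumes ns: "nonseparable V E B"
  shows "is_clique V E B"
proof -
  let ?M = "{B'. nonseparable V E B' \<and> B \<subseteq> B'}"
  have "?M \<subseteq> Pow V" unfolding nonseparable_def by auto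
  then have fin: "finite ?M" using finV by (meson finite_Pow_iff finite_subset)
  have "?M \<noteq> {}" using ns by blast
  from finite_has_maximal[OF fin this] obtain B' where
    B': "B' \<in> ?M" "\<forall>b\<in>?M. B' \<le> b \<longrightarrow> B' = b" by blast
  have "is_block V E B'" unfolding is_block_def
  proof (intro conjI allI impI)
    show "nonseparable V E B'" using B'(1) by simp
    fix B'' assume "nonseparable V E B'' \<and> B' \<subseteq> B''"
    then show "B'' = B'" using B' by blast
  qed
  then have "is_clique V E B'" by (rule blk)
  then show ?thesis using B'(1) ns unfolding is_clique_def nonseparable_def by blast
qed

lemma hub:
  assumes "h \<in> U" "\<And>u. u \<in> U \<Longrightarrow> (adjW E U)\<^sup>*\<^sup>* u h"
  shows "connected_on U E"
  unfolding conn_iff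
proof (intro ballI)
  fix u v assume "u \<in> U" "v \<in> U"
  show "(adjW E U)\<^sup>*\<^sup>* u v" using rtr_trans[OF assms(2)[OF \<open>u \<in> U\<close>] rtr_sym[OF assms(2)[OF \<open>v \<in> U\<close>]]] .
qed

lemma L1:
  assumes xa: "E x a" and xb: "E x b" and ab: "a \<noteq> b" and nab: "\<not> E a b"
  shows "\<not> (adjW E (V - {x}))\<^sup>*\<^sup>* a b"
proof
  let ?W = "V - {x}"
  assume c: "(adjW E ?W)\<^sup>*\<^sup>* a b"
  then obtain n0 where "(adjW E ?W ^^ n0) a b" using rtranclp_imp_relpowp[of "adjW E ?W" a b] by auto
  define n where "n = (LEAST n. (adjW E ?W ^^ n) a b)"
  have rn: "(adjW E ?W ^^ n) a b" unfolding n_def using \<open>(adjW E ?W ^^ n0) a b\<close> by (rule LeastI)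
  have nmin: "\<And>m. (adjW E ?W ^^ m) a b \<Longrightarrow> n \<le> m" unfolding n_def by (rule Least_le)
  have aW: "a \<in> ?W" using EV2[OF xa] Ene[OF xa] by auto
  have bW: "b \<in> ?W" using EV2[OF xb] Ene[OF xb] by auto
  obtain p where p: "walk_in ?W E p" "hd p = a" "last p = b" "length p = Suc n"
    using R2W[OF rn aW] by blast
  have ne: "p \<noteq> []" using p(4) by auto
  have p0: "p!0 = a" using p(2) ne by (simp add: hd_conv_nth)
  have pn: "p!n = b" using p(3,4) ne by (simp add: last_conv_nth)
  have n1: "n \<ge> 1" using p0 pn ab by (cases n) auto
  have dst: "p!i \<noteq> p!j" if ij: "i < j" "j < length p" for i j
  proof
    assume eq: "p!i = p!j"
    have r1: "(adjW E ?W ^^ (i - 0)) (p!0) (p!i)" using W2R'[OF p(1), of 0 i] ij by simp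
    have r2: "(adjW E ?W ^^ (n - j)) (p!j) (p!n)" using W2R'[OF p(1), of j n] ij p(4) by simp
    have "(adjW E ?W ^^ (i - 0 + (n - j))) a b" using relpowp_trans[OF r1 r2[folded eq]] p0 pn by simp
    then have "n \<le> i + (n - j)" using nmin by simp
    then show False using ij p(4) by simp
  qed
  have dist: "p!i \<noteq> p!j" if "i < length p" "j < length p" "i \<noteq> j" for i j
    using dst[of i j] dst[of j i] that by (cases "i < j") auto
  have pW: "set p \<subseteq> ?W" using p(1) unfolding walk_in_def by simp
  have xnp: "x \<notin> set p" using pW by auto
  define B where "B = insert x (set p)"
  have inB: "\<And>i. i < length p \<Longrightarrow> p!i \<in> B" unfolding B_def by simp
  have xB: "x \<in> B" unfolding B_def by simp
  have BV: "B \<subseteq> V" unfolding B_def using pW EV1[OF xa] by auto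
  have Exa: "E a x" "E b x" using Esym xa xb by auto
  have cardB: "2 \<le> card B"
  proof -
    have "card B = Suc (card (set p))" unfolding B_def using xnp by simp
    moreover have "card (set p) \<ge> 1" using ne by (simp add: Suc_leI card_gt_0_iff)
    ultimately show ?thesis by simp
  qed
  have cB: "connected_on B E"
  proof (rule hub[OF xB])
    fix u assume "u \<in> B"
    show "(adjW E B)\<^sup>*\<^sup>* u x"
    proof (cases "u = x")
      case True then show ?thesis by simp
    next
      case False
      then obtain i where i: "i < length p" "p!i = u" using \<open>u \<in> B\<close> unfolding B_def by (auto simp: in_set_conv_nth)
      have "(adjW E B)\<^sup>*\<^sup>* (p!0) (p!i)" using rtr_walk_seg[OF p(1), of 0 i B] i inB by auto
      then have "(adjW E B)\<^sup>*\<^sup>* u a" using rtr_sym i p0 by metis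
      moreover have "adjW E B a x" unfolding adjW_def using Exa xB inB[of 0] p0 ne by auto
      ultimately show ?thesis by (rule rtranclp.rtrancl_into_rtrancl)
    qed
  qed
  have cBy: "connected_on (B - {y}) E" if yB: "y \<in> B" for y
  proof (cases "y = x")
    case True
    then have Bx: "B - {y} = set p" unfolding B_def using xnp by auto
    have "a \<in> set p" using p0 ne nth_mem by fastforce
    show ?thesis unfolding Bx
    proof (rule hub[OF \<open>a \<in> set p\<close>])
      fix u assume "u \<in> set p"
      then obtain i where i: "i < length p" "p!i = u" by (auto simp: in_set_conv_nth)
      have "(adjW E (set p))\<^sup>*\<^sup>* (p!0) (p!i)" using rtr_walk_seg[OF p(1), of 0 i "set p"] i by auto
      then show "(adjW E (set p))\<^sup>*\<^sup>* u a" using rtr_sym i p0 by metis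
    qed
  next
    case False
    then obtain j where j: "j < length p" "p!j = y" using yB unfolding B_def by (auto simp: in_set_conv_nth)
    have xU: "x \<in> B - {y}" using xB False by simp
    show ?thesis
    proof (rule hub[OF xU])
      fix u assume uU: "u \<in> B - {y}"
      show "(adjW E (B - {y}))\<^sup>*\<^sup>* u x"
      proof (cases "u = x")
        case True then show ?thesis by simp
      next
        case False
        then obtain i where i: "i < length p" "p!i = u" using uU unfolding B_def by (auto simp: in_set_conv_nth)
        have ij: "i \<noteq> j" using i j uU by auto
        show ?thesis
        proof (cases "i < j")
          case True
          have seg: "\<forall>m. 0 \<le> m \<and> m \<le> i \<longrightarrow> p!m \<in> B - {y}"
            using dist[of _ j] j True i inB by auto
          have "(adjW E (B - {y}))\<^sup>*\<^sup>* (p!0) (p!i)" using rtr_walk_seg[OF p(1) _ i(1) seg] by simp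
          then have "(adjW E (B - {y}))\<^sup>*\<^sup>* u a" using rtr_sym i p0 by metis
          moreover have "adjW E (B - {y}) a x" unfolding adjW_def using Exa xU seg p0 by auto
          ultimately show ?thesis by (rule rtranclp.rtrancl_into_rtrancl)
        next
          case False
          then have ji: "j < i" using ij by simp
          have seg: "\<forall>m. i \<le> m \<and> m \<le> n \<longrightarrow> p!m \<in> B - {y}"
            using dist[of _ j] j ji i inB p(4) by auto
          have "(adjW E (B - {y}))\<^sup>*\<^sup>* (p!i) (p!n)" using rtr_walk_seg[OF p(1) _ _ seg] i p(4) by simp
          then have "(adjW E (B - {y}))\<^sup>*\<^sup>* u b" using i pn by simp
          moreover have "p!n \<in> B - {y}" using seg i(1) p(4) by simp
          then have "adjW E (B - {y}) b x" unfolding adjW_def using Exa xU pn by auto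
          ultimately show ?thesis by (rule rtranclp.rtrancl_into_rtrancl)
        qed
      qed
    qed
  qed
  have "nonseparable V E B" unfolding nonseparable_def using BV cardB cB cBy by blast
  then have "is_clique V E B" by (rule nonsep_clique)
  moreover have "a \<in> B" "b \<in> B" using inB[of 0] inB[of n] p0 pn p(4) by auto
  ultimately show False using ab nab unfolding is_clique_def by blast
qed


lemma L2:
  assumes pV: "p \<in> V" and yV: "y \<in> V" and cV: "c \<in> V" and Eyc: "E y c"
    and dy: "d p y = Suc m" and dc: "d p c = Suc m"
  shows "\<exists>w. E w y \<and> E w c \<and> d p w = m"
proof -
  obtain c' where c': "E c' c" "c' \<in> V" "d p c' = m" "(adjW E {w\<in>V. w = c' \<or> d p w < m})\<^sup>*\<^sup>* p c'"
    using pred[OF pV cV dc] by blast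
  obtain y' where y': "E y' y" "y' \<in> V" "d p y' = m" "(adjW E {w\<in>V. w = y' \<or> d p w < m})\<^sup>*\<^sup>* p y'"
    using pred[OF pV yV dy] by blast
  show ?thesis
  proof (cases "E c' y")
    case True
    then show ?thesis using c' Esym by blast
  next
    case False
    have ne: "c' \<noteq> y" using c'(3) dy by auto
    have n: "\<not> (adjW E (V - {c}))\<^sup>*\<^sup>* c' y"
      using L1[OF Esym[OF c'(1)] Esym[OF Eyc] ne False] by blast
    have s1: "{w\<in>V. w = c' \<or> d p w < m} \<subseteq> V - {c}" using c'(3) dc by auto
    have s2: "{w\<in>V. w = y' \<or> d p w < m} \<subseteq> V - {c}" using y'(3) dc by auto
    have A: "(adjW E (V - {c}))\<^sup>*\<^sup>* c' p" using rtr_sym[OF adjW_mono[OF s1 c'(4)]] .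
    have B: "(adjW E (V - {c}))\<^sup>*\<^sup>* p y'" using adjW_mono[OF s2 y'(4)] .
    have C: "adjW E (V - {c}) y' y" unfolding adjW_def using y' yV Ene[OF Eyc] dc by auto
    have "(adjW E (V - {c}))\<^sup>*\<^sup>* c' y" using rtranclp.rtrancl_into_rtrancl[OF rtr_trans[OF A B] C] .
    then show ?thesis using n by blast
  qed
qed

lemma clique_V: "is_clique V E K \<Longrightarrow> K \<subseteq> V" unfolding is_clique_def by simp
lemma clique_E: "is_clique V E K \<Longrightarrow> u \<in> K \<Longrightarrow> v \<in> K \<Longrightarrow> u \<noteq> v \<Longrightarrow> E u v"
  unfolding is_clique_def by blast

lemma gate:
  assumes Kc: "is_clique V E K" and maxc: "\<And>K'. is_clique V E K' \<Longrightarrow> card K' \<le> card K"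
    and pV: "p \<in> V" and cK: "c \<in> K" and near: "\<forall>y\<in>K. d p c \<le> d p y"
    and yK: "y \<in> K" and yc: "y \<noteq> c"
  shows "d p y = Suc (d p c)"
proof (rule ccontr)
  assume A: "d p y \<noteq> Suc (d p c)"
  have KV: "K \<subseteq> V" using clique_V[OF Kc] .
  have Eyc: "E y c" using clique_E[OF Kc yK cK yc] .
  have "d p y \<le> d p c + 1" using d_edge[OF pV Esym[OF Eyc]] .
  moreover have "d p c \<le> d p y" using near yK by blast
  ultimately have eq: "d p y = d p c" using A by simp
  show False
  proof (cases "d p c")
    case 0
    then have "p = c" using d_0[OF pV] cK KV by blast
    moreover have "p = y" using d_0[OF pV] yK KV eq 0 by auto
    ultimately show False using yc by simp
  next
    case (Suc m)
    obtain w where w: "E w y" "E w c" "d p w = m"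
      using L2[OF pV _ _ Eyc, of m] yK cK KV eq Suc by auto
    have wK: "w \<notin> K"
    proof
      assume "w \<in> K"
      then have "d p c \<le> d p w" using near by blast
      then show False using w(3) Suc by simp
    qed
    have "is_clique V E (insert w K)"
      unfolding is_clique_def
    proof (intro conjI ballI impI)
      show "insert w K \<subseteq> V" using KV EV1[OF w(1)] by blast
      fix u v assume uv: "u \<in> insert w K" "v \<in> insert w K" "u \<noteq> v"
      have wz: "E w z" if zK: "z \<in> K" for z
      proof (cases "z = y \<or> z = c")
        case True then show ?thesis using w by blast
      next
        case False
        show ?thesis
        proof (rule ccontr)
          assume nE: "\<not> E w z"
          have wz: "w \<noteq> z" using wK zK by blast
          have n: "\<not> (adjW E (V - {c}))\<^sup>*\<^sup>* w z"
            using L1[OF Esym[OF w(2)] clique_E[OF Kc cK zK] wz nE] False by blast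
          have a1: "adjW E (V - {c}) w y" unfolding adjW_def using w EV1[OF w(1)] EV2[OF w(1)] Ene[OF w(2)] yc by auto
          have a2: "adjW E (V - {c}) y z" unfolding adjW_def using clique_E[OF Kc yK zK] False KV yK zK yc by auto
          have "(adjW E (V - {c}))\<^sup>*\<^sup>* w z"
            using rtranclp.rtrancl_into_rtrancl[OF r_into_rtranclp[of "adjW E (V - {c})", OF a1] a2] .
          then show False using n by blast
        qed
      qed
      show "E u v"
      proof (cases "u = w")
        case True then show ?thesis using uv wz by auto
      next
        case False
        note uw = False
        show ?thesis
        proof (cases "v = w")
          case True then show ?thesis using uv uw wz Esym by auto
        next
          case False then show ?thesis using uv uw clique_E[OF Kc] by auto
        qed
      qed
    qed
    then have "card (insert w K) \<le> card K" by (rule maxc)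
    moreover have "finite K" using KV finV finite_subset by blast
    ultimately show False using wK by simp
  qed
qed

lemma gp_C:
  assumes Kc: "is_clique V E K" and maxc: "\<And>K'. is_clique V E K' \<Longrightarrow> card K' \<le> card K"
    and pV: "p \<in> V" and cK: "c \<in> K" and near: "\<forall>y\<in>K. d p c \<le> d p y"
  shows "gp_set V E (insert p (K - {c}))"
proof -
  have KV: "K \<subseteq> V" using clique_V[OF Kc] .
  have g: "\<And>y. y \<in> K - {c} \<Longrightarrow> d p y = Suc (d p c)" using gate[OF Kc maxc pV cK near] by blast
  have g': "\<And>y. y \<in> K - {c} \<Longrightarrow> d y p = Suc (d p c)"
  proof -
    fix y assume y: "y \<in> K - {c}"
    then have "d y p = d p y" using d_sym[of y p] pV KV by auto
    then show "d y p = Suc (d p c)" using g[OF y] by simp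
  qed
  have pn: "p \<notin> K - {c}"
  proof
    assume "p \<in> K - {c}"
    then have "d p p = Suc (d p c)" by (rule g)
    then show False using d_refl by simp
  qed
  have kk: "\<And>u v. u \<in> K - {c} \<Longrightarrow> v \<in> K - {c} \<Longrightarrow> u \<noteq> v \<Longrightarrow> d u v = 1"
    using d_E clique_E[OF Kc] by blast
  show ?thesis
  proof (rule gp_crit)
    show "insert p (K - {c}) \<subseteq> V" using KV pV by blast
    fix u v w assume A: "u \<in> insert p (K - {c})" "v \<in> insert p (K - {c})" "w \<in> insert p (K - {c})"
      "u \<noteq> v" "v \<noteq> w" "u \<noteq> w"
    show "d u w \<noteq> d u v + d v w"
    proof (cases "u = p")
      case True
      then have "v \<in> K - {c}" "w \<in> K - {c}" using A by auto
      then show ?thesis using True g kk A by simp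
    next
      case False note up = False
      show ?thesis
      proof (cases "v = p")
        case True
        then have "u \<in> K - {c}" "w \<in> K - {c}" using A up by auto
        then show ?thesis using True g g' kk A by simp
      next
        case False note vp = False
        show ?thesis
        proof (cases "w = p")
          case True
          then have "u \<in> K - {c}" "v \<in> K - {c}" using A up vp by auto
          then show ?thesis using True g g' kk A by simp
        next
          case False
          then have "u \<in> K - {c}" "v \<in> K - {c}" "w \<in> K - {c}" using A up vp by auto
          then show ?thesis using kk A by simp
        qed
      qed
    qed
  qed
qed


definition LM :: "'a set \<Rightarrow> 'a set \<Rightarrow> bool" where
  "LM S S' \<longleftrightarrow> gp_set V E S \<and> legal_move V E S S'"

lemma LM_sym: "LM S S' \<Longrightarrow> LM S' S"
proof -
  assume "LM S S'"
  then obtain u v where uv: "gp_set V E S" "u \<in> S" "v \<notin> S" "E u v" "S' = insert v (S - {u})" "gp_set V E S'"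
    unfolding LM_def legal_move_def by blast
  have "v \<in> S'" "u \<notin> S'" "E v u" "S = insert u (S' - {v})" using uv Esym by auto
  then show "LM S' S" unfolding LM_def legal_move_def using uv by blast
qed

lemma LM_rtr_sym: "LM\<^sup>*\<^sup>* S S' \<Longrightarrow> LM\<^sup>*\<^sup>* S' S"
proof (induction rule: rtranclp_induct)
  case base then show ?case by simp
next
  case (step y z)
  show ?case using converse_rtranclp_into_rtranclp[OF LM_sym[OF step(2)] step(3)] .
qed

lemma reach:
  assumes Kc: "is_clique V E K" and maxc: "\<And>K'. is_clique V E K' \<Longrightarrow> card K' \<le> card K"
    and cK: "c \<in> K"
  shows "p \<in> V \<Longrightarrow> (\<forall>y\<in>K. d p c \<le> d p y) \<Longrightarrow> d p c = m \<Longrightarrow> LM\<^sup>*\<^sup>* K (insert p (K - {c}))"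
proof (induction m arbitrary: p)
  have KV: "K \<subseteq> V" using clique_V[OF Kc] .
  case 0
  then have "p = c" using d_0[OF 0(1)] cK KV by blast
  then have "insert p (K - {c}) = K" using cK by blast
  then show ?case by simp
next
  have KV: "K \<subseteq> V" using clique_V[OF Kc] .
  have cV: "c \<in> V" using cK KV by blast
  case (Suc m)
  have "d c p = Suc m" using d_sym[OF Suc(2) cV] Suc(4) by simp
  then obtain b where b: "E b p" "b \<in> V" "d c b = m" using pred[OF cV Suc(2)] by blast
  have dbc: "d b c = m" using d_sym[OF b(2) cV] b(3) by simp
  have nb: "\<forall>y\<in>K. d b c \<le> d b y"
  proof
    fix y assume yK: "y \<in> K"
    have "d p y \<le> d p b + d b y" using d_tri[OF Suc(2) b(2)] yK KV by blast
    moreover have "d p b = 1" using d_E[OF Esym[OF b(1)]] .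
    moreover have "d p c \<le> d p y" using Suc(3) yK by blast
    ultimately show "d b c \<le> d b y" using dbc Suc(4) by simp
  qed
  have IH: "LM\<^sup>*\<^sup>* K (insert b (K - {c}))" using Suc.IH[OF b(2) nb dbc] .
  have gb: "gp_set V E (insert b (K - {c}))" using gp_C[OF Kc maxc b(2) cK nb] .
  have gp: "gp_set V E (insert p (K - {c}))" using gp_C[OF Kc maxc Suc(2) cK Suc(3)] .
  have pK: "p \<notin> K - {c}"
  proof
    assume "p \<in> K - {c}"
    then have "d p c \<le> d p p" using Suc(3) by blast
    then show False using d_refl Suc(4) by simp
  qed
  have bK: "b \<notin> K - {c}"
  proof
    assume "b \<in> K - {c}"
    then have "d b c \<le> d b b" using nb by blast
    then have "d b c = 0" using d_refl by simp
    then have "b = c" using d_0[OF b(2) cV] by simp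
    then show False using \<open>b \<in> K - {c}\<close> by simp
  qed
  have "legal_move V E (insert b (K - {c})) (insert p (K - {c}))"
    unfolding legal_move_def
  proof (intro exI conjI)
    show "b \<in> insert b (K - {c})" by simp
    show "p \<notin> insert b (K - {c})" using pK Ene[OF b(1)] by auto
    show "E b p" using b(1) .
    show "insert p (K - {c}) = insert p (insert b (K - {c}) - {b})" using bK by auto
    show "gp_set V E (insert p (K - {c}))" using gp .
  qed
  then have "LM (insert b (K - {c})) (insert p (K - {c}))" unfolding LM_def using gb by blast
  then show ?case using IH by simp
qed

lemma cover:
  assumes H: "\<forall>t\<in>V. \<exists>T. LM\<^sup>*\<^sup>* K T \<and> t \<in> T" and fin: "finite F"
  shows "F \<subseteq> V \<Longrightarrow> \<exists>cs. cs \<noteq> [] \<and> hd cs = K \<and> last cs = K \<and> successively LM cs \<and> F \<subseteq> \<Union> (set cs)"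
  using fin
proof (induction rule: finite_induct)
  case empty then show ?case by (intro exI[of _ "[K]"]) simp
next
  case (insert t F)
  then obtain cs where cs: "cs \<noteq> []" "hd cs = K" "last cs = K" "successively LM cs" "F \<subseteq> \<Union> (set cs)"
    by blast
  obtain T where T: "LM\<^sup>*\<^sup>* K T" "t \<in> T" using H insert(4) by blast
  obtain l1 where l1: "l1 \<noteq> []" "hd l1 = K" "last l1 = T" "successively LM l1" "T \<in> set l1"
    using list_of_rtr[OF T(1)] by blast
  obtain l2 where l2: "l2 \<noteq> []" "hd l2 = T" "last l2 = K" "successively LM l2"
    using list_of_rtr[OF LM_rtr_sym[OF T(1)]] by blast
  define J where "J = l1 @ tl l2"
  have J: "successively LM J" "J \<noteq> []" "hd J = K" "last J = K" "set J = set l1 \<union> set l2"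
    using join[OF l1(4) l2(4) l1(1) l2(1)] l1 l2 unfolding J_def by auto
  define C where "C = cs @ tl J"
  have C: "successively LM C" "C \<noteq> []" "hd C = K" "last C = K" "set C = set cs \<union> set J"
    using join[OF cs(4) J(1) cs(1) J(2)] cs J unfolding C_def by auto
  have "insert t F \<subseteq> \<Union> (set C)" using C(5) J(5) l1(5) T(2) cs(5) by blast
  then show ?case using C by blast
qed

lemma clique_mobile:
  assumes Kc: "is_clique V E K" and maxc: "\<And>K'. is_clique V E K' \<Longrightarrow> card K' \<le> card K"
  shows "mobile_gp_set V E K"
proof -
  have KV: "K \<subseteq> V" using clique_V[OF Kc] .
  obtain v where v: "v \<in> V" using Vne by blast
  have "is_clique V E {v}" unfolding is_clique_def using v by simp
  then have "card {v} \<le> card K" by (rule maxc)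
  then have "K \<noteq> {}" by auto
  then obtain c where cK: "c \<in> K" by blast
  have "\<forall>y\<in>K. d c c \<le> d c y" using d_refl by simp
  then have "gp_set V E (insert c (K - {c}))" using gp_C[OF Kc maxc _ cK] cK KV by blast
  then have gpK: "gp_set V E K" using cK by (simp add: insert_absorb)
  have H: "\<forall>t\<in>V. \<exists>T. LM\<^sup>*\<^sup>* K T \<and> t \<in> T"
  proof
    fix t assume tV: "t \<in> V"
    obtain c where c: "c \<in> K" "\<forall>y. y \<in> K \<longrightarrow> d t c \<le> d t y"
      using ex_has_least_nat[of "\<lambda>c. c \<in> K" _ "d t"] \<open>K \<noteq> {}\<close> by blast
    have "LM\<^sup>*\<^sup>* K (insert t (K - {c}))" using reach[OF Kc maxc c(1) tV] c(2) by blast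
    then show "\<exists>T. LM\<^sup>*\<^sup>* K T \<and> t \<in> T" by blast
  qed
  obtain cs where cs: "cs \<noteq> []" "hd cs = K" "successively LM cs" "V \<subseteq> \<Union> (set cs)"
    using cover[OF H finV] by blast
  have "successively (legal_move V E) cs" using cs(3) by (rule successively_mono) (simp add: LM_def)
  then have "\<forall>i. Suc i < length cs \<longrightarrow> legal_move V E (cs!i) (cs!Suc i)" using chain_succ by blast
  then show ?thesis unfolding mobile_gp_set_def using gpK cs by blast
qed


definition comp :: "'a \<Rightarrow> 'a \<Rightarrow> 'a set" where
  "comp x z = {w. (adjW E (V - {x}))\<^sup>*\<^sup>* z w}"

definition Inv :: "'a \<Rightarrow> 'a \<Rightarrow> 'a set \<Rightarrow> bool" where
  "Inv x z S \<longleftrightarrow> (\<forall>s\<in>S. \<forall>t\<in>S. s \<notin> comp x z \<longrightarrow> t \<notin> comp x z \<longrightarrow> s = t)"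

lemma comp_notx: "z \<noteq> x \<Longrightarrow> x \<notin> comp x z"
  unfolding comp_def using rtr_in by fastforce

lemma comp_V: "z \<in> V \<Longrightarrow> w \<in> comp x z \<Longrightarrow> w \<in> V"
  unfolding comp_def using rtr_in by fastforce

lemma comp_step: "w \<in> comp x z \<Longrightarrow> (adjW E (V - {x}))\<^sup>*\<^sup>* w w' \<Longrightarrow> w' \<in> comp x z"
  unfolding comp_def using rtr_trans by blast

lemma comp_conn: "w \<in> comp x z \<Longrightarrow> w' \<in> comp x z \<Longrightarrow> (adjW E (V - {x}))\<^sup>*\<^sup>* w w'"
  unfolding comp_def using rtr_trans rtr_sym by blast

lemma gp_V: "gp_set V E S \<Longrightarrow> S \<subseteq> V" unfolding gp_set_def by simp
lemma gp_fin: "gp_set V E S \<Longrightarrow> finite S" using gp_V finV finite_subset by blast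

lemma inv_step:
  assumes u: "u \<in> S" and v: "v \<notin> S" and Euv: "E u v" and S': "S' = insert v (S - {u})"
    and gS: "gp_set V E S" and gS': "gp_set V E S'" and k3: "3 \<le> card S"
    and zx: "z \<noteq> x" and I: "Inv x z S"
  shows "Inv x z S'"
proof -
  have fS: "finite S" using gp_fin[OF gS] .
  have xc: "x \<notin> comp x z" using comp_notx[OF zx] .
  show ?thesis
  proof (cases "v = x")
    case True
    have c2: "2 \<le> card (S - {u})" using k3 u fS by simp
    have "\<not> card (S - {u}) \<le> Suc 0" using c2 by simp
    then have "\<not> (\<forall>a1 \<in> S - {u}. \<forall>a2 \<in> S - {u}. a1 = a2)"
      using card_le_Suc0_iff_eq[of "S - {u}"] fS by simp
    then obtain s1 s2 where s12: "s1 \<in> S - {u}" "s2 \<in> S - {u}" "s1 \<noteq> s2" by blast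
    have "s1 \<in> comp x z \<or> s2 \<in> comp x z" using I s12 unfolding Inv_def by blast
    then obtain s0 where s0: "s0 \<in> S - {u}" "s0 \<in> comp x z" using s12 by blast
    have allc: "s \<in> comp x z" if s: "s \<in> S - {u}" for s
    proof -
      have "s0 \<noteq> x" "s \<noteq> x" using s0 s v True by auto
      moreover have "x \<in> S'" "s0 \<in> S'" "s \<in> S'" using S' True s0 s by auto
      ultimately have "(adjW E (V - {x}))\<^sup>*\<^sup>* s0 s" using gp_sep[OF gS', of x s0 s] by simp
      then show ?thesis using comp_step[OF s0(2)] by simp
    qed
    show ?thesis unfolding Inv_def
    proof (intro ballI impI)
      fix s t assume "s \<in> S'" "t \<in> S'" "s \<notin> comp x z" "t \<notin> comp x z"
      then show "s = t" using allc S' True by auto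
    qed
  next
    case False note vx = False
    show ?thesis
    proof (cases "u = x")
      case True
      have allc: "s \<in> comp x z" if "s \<in> S" "s \<noteq> x" for s
        using I that u True xc unfolding Inv_def by blast
      show ?thesis unfolding Inv_def
      proof (intro ballI impI)
        fix s t assume "s \<in> S'" "t \<in> S'" "s \<notin> comp x z" "t \<notin> comp x z"
        then show "s = t" using allc S' True by auto
      qed
    next
      case False
      have a: "adjW E (V - {x}) u v" unfolding adjW_def using Euv EV1[OF Euv] EV2[OF Euv] False vx by auto
      have uv: "u \<in> comp x z \<longleftrightarrow> v \<in> comp x z"
        using comp_step[of u x z v] comp_step[of v x z u] r_into_rtranclp[of "adjW E (V - {x})", OF a]
          r_into_rtranclp[of "adjW E (V - {x})", OF adjW_sym[OF a]] by blast
      show ?thesis unfolding Inv_def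
      proof (intro ballI impI)
        fix s t assume A: "s \<in> S'" "t \<in> S'" "s \<notin> comp x z" "t \<notin> comp x z"
        show "s = t"
        proof (cases "s = v")
          case True
          show ?thesis
          proof (cases "t = v")
            case True then show ?thesis using \<open>s = v\<close> by simp
          next
            case False
            then have "t \<in> S" "t \<noteq> u" using A S' by auto
            moreover have "u \<notin> comp x z" using uv A \<open>s = v\<close> by simp
            ultimately show ?thesis using I u A unfolding Inv_def by blast
          qed
        next
          case False note sv = False
          show ?thesis
          proof (cases "t = v")
            case True
            have "s \<in> S" "s \<noteq> u" using A S' sv by auto
            moreover have "u \<notin> comp x z" using uv A True by simp
            ultimately show ?thesis using I u A unfolding Inv_def by blast
          next
            case False
            then have "s \<in> S" "t \<in> S" using A S' sv by auto
            then show ?thesis using I A unfolding Inv_def by blast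
          qed
        qed
      qed
    qed
  qed
qed

lemma legal_card: "legal_move V E S S' \<Longrightarrow> finite S \<Longrightarrow> card S' = card S"
proof -
  assume lm: "legal_move V E S S'" and f: "finite S"
  then obtain u v where uv: "u \<in> S" "v \<notin> S" "S' = insert v (S - {u})" unfolding legal_move_def by blast
  then have "card S' = Suc (card (S - {u}))" using f by simp
  also have "\<dots> = card S"
  proof -
    have "card S > 0" using uv(1) f card_gt_0_iff by blast
    then show ?thesis using uv(1) f by simp
  qed
  finally show ?thesis .
qed

lemma mobile_invs:
  assumes m: "mobile_gp_set V E S" and cs: "cs \<noteq> []" "hd cs = S"
    "\<forall>i. Suc i < length cs \<longrightarrow> legal_move V E (cs!i) (cs!Suc i)"
  shows "i < length cs \<Longrightarrow> gp_set V E (cs!i) \<and> card (cs!i) = card S"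
proof (induction i)
  case 0
  then show ?case using m cs unfolding mobile_gp_set_def by (simp add: hd_conv_nth)
next
  case (Suc i)
  then have lm: "legal_move V E (cs!i) (cs!Suc i)" using cs(3) by blast
  have IH: "gp_set V E (cs!i) \<and> card (cs!i) = card S" using Suc by simp
  have "gp_set V E (cs!Suc i)" using lm unfolding legal_move_def by blast
  moreover have "card (cs!Suc i) = card (cs!i)" using legal_card[OF lm gp_fin] IH by blast
  ultimately show ?case using IH by simp
qed

lemma mobile_P:
  assumes m: "mobile_gp_set V E S" and k3: "3 \<le> card S" and xV: "x \<in> V"
  shows "\<exists>z. z \<in> V \<and> z \<noteq> x \<and> Inv x z S"
proof -
  obtain cs where cs: "cs \<noteq> []" "hd cs = S"
    "\<forall>i. Suc i < length cs \<longrightarrow> legal_move V E (cs!i) (cs!Suc i)" "V \<subseteq> \<Union> (set cs)"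
    using m unfolding mobile_gp_set_def by blast
  note inv = mobile_invs[OF m cs(1-3)]
  obtain T where T: "T \<in> set cs" "x \<in> T" using cs(4) xV by blast
  obtain i where i: "i < length cs" "x \<in> cs!i" using T by (metis in_set_conv_nth)
  have gi: "gp_set V E (cs!i)" and ci: "card (cs!i) = card S" using inv[OF i(1)] by auto
  have fi: "finite (cs!i)" using gp_fin[OF gi] .
  have "card (cs!i - {x}) \<ge> 2" using ci k3 i(2) fi by simp
  then have "cs!i - {x} \<noteq> {}" by (metis card.empty not_numeral_le_zero)
  then obtain z where z: "z \<in> cs!i" "z \<noteq> x" by blast
  have zV: "z \<in> V" using gp_V[OF gi] z by blast
  have Ii: "Inv x z (cs!i)" unfolding Inv_def
  proof (intro ballI impI)
    fix s t assume A: "s \<in> cs!i" "t \<in> cs!i" "s \<notin> comp x z" "t \<notin> comp x z"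
    have "s = x"
    proof (rule ccontr)
      assume "s \<noteq> x"
      then have "(adjW E (V - {x}))\<^sup>*\<^sup>* z s" using gp_sep[OF gi i(2) z(1) A(1) z(2)] by blast
      then show False using A(3) unfolding comp_def by blast
    qed
    moreover have "t = x"
    proof (rule ccontr)
      assume "t \<noteq> x"
      then have "(adjW E (V - {x}))\<^sup>*\<^sup>* z t" using gp_sep[OF gi i(2) z(1) A(2) z(2)] by blast
      then show False using A(4) unfolding comp_def by blast
    qed
    ultimately show "s = t" by simp
  qed
  have "n \<le> i \<Longrightarrow> Inv x z (cs!(i - n))" for n
  proof (induction n)
    case 0 then show ?case using Ii by simp
  next
    case (Suc n)
    let ?A = "cs!(i - Suc n)" and ?B = "cs!(i - n)"
    have eq: "Suc (i - Suc n) = i - n" using Suc(2) by simp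
    have lm: "legal_move V E ?A ?B" using cs(3) eq i(1) by (metis Suc_leD diff_le_self le_less_trans)
    have IB: "Inv x z ?B" using Suc by simp
    obtain u v where uv: "u \<in> ?A" "v \<notin> ?A" "E u v" "?B = insert v (?A - {u})"
      using lm unfolding legal_move_def by blast
    have gA: "gp_set V E ?A" and cA: "card ?A = card S" using inv[of "i - Suc n"] i(1) by auto
    have gB: "gp_set V E ?B" and cB: "card ?B = card S" using inv[of "i - n"] i(1) by auto
    have "v \<in> ?B" "u \<notin> ?B" "E v u" "?A = insert u (?B - {v})" using uv Esym by auto
    from inv_step[OF this(1-4) gB gA _ z(2) IB] show ?case using cB k3 by simp
  qed
  from this[of i] have "Inv x z S" using cs(1,2) by (simp add: hd_conv_nth)
  then show ?thesis using zV z(2) by blast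
qed


definition mc :: "'a set \<Rightarrow> bool" where
  "mc K \<longleftrightarrow> is_clique V E K \<and> (\<forall>K'. is_clique V E K' \<and> K \<subseteq> K' \<longrightarrow> K' = K)"

lemma ext_mc: assumes "is_clique V E N" shows "\<exists>K. mc K \<and> N \<subseteq> K"
proof -
  let ?M = "{K. is_clique V E K \<and> N \<subseteq> K}"
  have "?M \<subseteq> Pow V" unfolding is_clique_def by auto
  then have fin: "finite ?M" using finV by (meson finite_Pow_iff finite_subset)
  have "?M \<noteq> {}" using assms by blast
  from finite_has_maximal[OF fin this] obtain K where
    K: "K \<in> ?M" "\<forall>b\<in>?M. K \<le> b \<longrightarrow> K = b" by blast
  have "mc K" unfolding mc_def
  proof (intro conjI allI impI)
    show "is_clique V E K" using K(1) by simp
    fix K' assume "is_clique V E K' \<and> K \<subseteq> K'"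
    then show "K' = K" using K by blast
  qed
  then show ?thesis using K(1) by blast
qed

definition sd :: "'a \<Rightarrow> 'a set \<Rightarrow> nat" where
  "sd s K = (LEAST n. \<exists>y\<in>K. d s y = n)"

lemma sd_le: "y \<in> K \<Longrightarrow> sd s K \<le> d s y"
  unfolding sd_def by (rule Least_le) blast

lemma sd_ex: assumes "K \<noteq> {}" shows "\<exists>y\<in>K. d s y = sd s K"
proof -
  obtain y where "y \<in> K" using assms by blast
  then have "\<exists>n. \<exists>y\<in>K. d s y = n" by blast
  then show ?thesis unfolding sd_def by (rule LeastI_ex)
qed

lemma static:
  assumes SV: "S \<subseteq> V" and k3: "3 \<le> card S"
    and P: "\<forall>x\<in>V. \<exists>z. z \<in> V \<and> z \<noteq> x \<and> Inv x z S"
  shows "\<exists>K. is_clique V E K \<and> card S \<le> card K"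
proof -
  have fS: "finite S" using SV finV finite_subset by blast
  obtain zf where zf: "\<forall>x\<in>V. zf x \<in> V \<and> zf x \<noteq> x \<and> Inv x (zf x) S"
    using bchoice[OF P] by blast
  define D where "D x = comp x (zf x)" for x
  have D_notx: "x \<notin> D x" if "x \<in> V" for x using comp_notx zf that unfolding D_def by blast
  have D_V: "w \<in> V" if "w \<in> D x" "x \<in> V" for w x using comp_V zf that unfolding D_def by blast
  have D_step: "w' \<in> D x" if "w \<in> D x" "(adjW E (V - {x}))\<^sup>*\<^sup>* w w'" for w w' x
    using comp_step that unfolding D_def by blast
  have D_conn: "(adjW E (V - {x}))\<^sup>*\<^sup>* w w'" if "w \<in> D x" "w' \<in> D x" for w w' x
    using comp_conn that unfolding D_def by blast
  have D_out: "s = t" if "x \<in> V" "s \<in> S" "t \<in> S" "s \<notin> D x" "t \<notin> D x" for x s t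
  proof -
    have "Inv x (zf x) S" using zf that(1) by blast
    then show ?thesis using that(2-5) unfolding Inv_def D_def by blast
  qed
  define Phi where "Phi K = (\<Sum>s\<in>S. sd s K)" for K
  obtain K0 where "mc K0" using ext_mc[of "{}"] unfolding is_clique_def by blast
  then obtain K where K: "mc K" and Kmin: "\<forall>K'. mc K' \<longrightarrow> Phi K \<le> Phi K'"
    using ex_has_least_nat[of mc K0 Phi] by blast
  have Kc: "is_clique V E K" using K unfolding mc_def by simp
  have KV: "K \<subseteq> V" using clique_V[OF Kc] .
  have finK: "finite K" using KV finV finite_subset by blast
  have Kne: "K \<noteq> {}"
  proof
    assume "K = {}"
    obtain v where v: "v \<in> V" using Vne by blast
    have "is_clique V E {v}" unfolding is_clique_def using v by simp
    then have "{v} = K" using K \<open>K = {}\<close> unfolding mc_def by blast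
    then show False using \<open>K = {}\<close> by simp
  qed
  have sink: "K - {c} \<subseteq> D c" if cK: "c \<in> K" for c
  proof (rule ccontr)
    assume "\<not> K - {c} \<subseteq> D c"
    then obtain y0 where y0: "y0 \<in> K" "y0 \<noteq> c" "y0 \<notin> D c" by blast
    have cV: "c \<in> V" using cK KV by blast
    have a: "y \<notin> D c" if yK: "y \<in> K" "y \<noteq> c" for y
    proof
      assume yD: "y \<in> D c"
      show False
      proof (cases "y = y0")
        case True then show False using yD y0 by simp
      next
        case False
        have "adjW E (V - {c}) y y0" unfolding adjW_def
          using clique_E[OF Kc yK(1) y0(1) False] KV yK y0 by auto
        then have "y0 \<in> D c" using D_step[OF yD] by blast
        then show False using y0 by simp
      qed
    qed
    define N where "N = insert c {b \<in> D c. E b c}"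
    have Nc: "is_clique V E N" unfolding is_clique_def
    proof (intro conjI ballI impI)
      show "N \<subseteq> V" unfolding N_def using cV D_V cV by blast
      fix u v assume uv: "u \<in> N" "v \<in> N" "u \<noteq> v"
      show "E u v"
      proof (cases "u = c")
        case True then show ?thesis using uv Esym unfolding N_def by auto
      next
        case False note uc = False
        show ?thesis
        proof (cases "v = c")
          case True then show ?thesis using uv uc unfolding N_def by auto
        next
          case False
          have uD: "u \<in> D c" "E u c" and vD: "v \<in> D c" "E v c" using uv uc False unfolding N_def by auto
          show ?thesis
          proof (rule ccontr)
            assume "\<not> E u v"
            from L1[OF Esym[OF uD(2)] Esym[OF vD(2)] uv(3) this] show False
              using D_conn[OF uD(1) vD(1)] by blast
          qed
        qed
      qed
    qed
    obtain K' where K': "mc K'" "N \<subseteq> K'" using ext_mc[OF Nc] by blast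
    have cK': "c \<in> K'" using K'(2) unfolding N_def by blast
    have inside: "sd s K' + 1 \<le> sd s K" if sS: "s \<in> S \<inter> D c" for s
    proof -
      have sV: "s \<in> V" using sS SV by blast
      have sD: "s \<in> D c" using sS by blast
      have sc: "s \<noteq> c" using sD D_notx[OF cV] by blast
      have far: "d s c < d s y" if yK: "y \<in> K" "y \<noteq> c" for y
      proof (rule ccontr)
        assume "\<not> d s c < d s y"
        then have le: "d s y \<le> d s c" by simp
        have yV: "y \<in> V" using yK KV by blast
        have pa: "(adjW E {w\<in>V. w = y \<or> d s w < d s y})\<^sup>*\<^sup>* s y"
          using path_avoid[OF d_rel[OF sV yV] refl sV] .
        have "{w\<in>V. w = y \<or> d s w < d s y} \<subseteq> V - {c}" using le yK(2) by auto
        from adjW_mono[OF this pa] have "y \<in> D c" using D_step[OF sD] by blast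
        then show False using a[OF yK] by simp
      qed
      obtain y where y: "y \<in> K" "d s y = sd s K" using sd_ex[OF Kne] by blast
      have "sd s K \<le> d s c" using sd_le[OF cK] .
      then have "y = c" using far[of y] y by fastforce
      then have sdK: "sd s K = d s c" using y by simp
      have "d s c \<noteq> 0" using d_0[OF sV cV] sc by blast
      then obtain m where m: "d s c = Suc m" by (cases "d s c") auto
      obtain b where b: "E b c" "b \<in> V" "d s b = m" "(adjW E {w\<in>V. w = b \<or> d s w < m})\<^sup>*\<^sup>* s b"
        using pred[OF sV cV m] by blast
      have "{w\<in>V. w = b \<or> d s w < m} \<subseteq> V - {c}" using Ene[OF b(1)] m by auto
      from adjW_mono[OF this b(4)] have "b \<in> D c" using D_step[OF sD] by blast
      then have "b \<in> K'" using K'(2) b(1) unfolding N_def by blast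
      then have "sd s K' \<le> m" using sd_le[of b K' s] b(3) by simp
      then show ?thesis using sdK m by simp
    qed
    have outside: "sd s K' \<le> sd s K + 1" if sS: "s \<in> S" for s
    proof -
      have sV: "s \<in> V" using sS SV by blast
      obtain y where y: "y \<in> K" "d s y = sd s K" using sd_ex[OF Kne] by blast
      have yV: "y \<in> V" using y KV by blast
      have "d y c \<le> 1"
      proof (cases "y = c")
        case True then show ?thesis using d_refl by simp
      next
        case False then show ?thesis using d_E[OF clique_E[OF Kc y(1) cK False]] by simp
      qed
      moreover have "d s c \<le> d s y + d y c" using d_tri[OF sV yV cV] .
      moreover have "sd s K' \<le> d s c" using sd_le[OF cK'] .
      ultimately show ?thesis using y by simp
    qed
    let ?A = "S \<inter> D c" and ?B = "S - D c"
    have cB: "card ?B \<le> 1"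
    proof -
      have fB: "finite ?B" using fS by simp
      have "\<forall>a1\<in>?B. \<forall>a2\<in>?B. a1 = a2" using D_out[OF cV] by blast
      then have "card ?B \<le> Suc 0" using card_le_Suc0_iff_eq[OF fB] by blast
      then show ?thesis by simp
    qed
    have cS: "card S = card ?A + card ?B" using sum.Int_Diff[OF fS, of "\<lambda>_. (1::nat)" "D c"] by simp
    have s1: "(\<Sum>s\<in>?A. sd s K' + 1) \<le> (\<Sum>s\<in>?A. sd s K)" using inside by (rule sum_mono)
    have s2: "(\<Sum>s\<in>?B. sd s K') \<le> (\<Sum>s\<in>?B. sd s K + 1)" using outside by (intro sum_mono) blast
    have e1: "(\<Sum>s\<in>?A. sd s K' + 1) = (\<Sum>s\<in>?A. sd s K') + card ?A" by (simp only: sum.distrib) simp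
    have e2: "(\<Sum>s\<in>?B. sd s K + 1) = (\<Sum>s\<in>?B. sd s K) + card ?B" by (simp only: sum.distrib) simp
    have p1: "Phi K = (\<Sum>s\<in>?A. sd s K) + (\<Sum>s\<in>?B. sd s K)"
      unfolding Phi_def using sum.Int_Diff[OF fS] by blast
    have p2: "Phi K' = (\<Sum>s\<in>?A. sd s K') + (\<Sum>s\<in>?B. sd s K')"
      unfolding Phi_def using sum.Int_Diff[OF fS] by blast
    have "Phi K' < Phi K" using p1 p2 s1 s2 e1 e2 cS cB k3 by linarith
    then show False using Kmin K'(1) by (meson not_le)
  qed
  \<comment> \<open>each robot outside K is separated from the rest of K by some vertex of K\<close>
  have fmap: "\<exists>c\<in>K. s \<notin> D c" if sS: "s \<in> S" and sK: "s \<notin> K" for s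
  proof -
    have sV: "s \<in> V" using sS SV by blast
    obtain c where c: "c \<in> K" "\<forall>y. y \<in> K \<longrightarrow> d s c \<le> d s y"
      using ex_has_least_nat[of "\<lambda>c. c \<in> K" _ "d s"] Kne by blast
    have cV: "c \<in> V" using c KV by blast
    have "d s c \<noteq> 0" using d_0[OF sV cV] sK c(1) by blast
    then obtain m where m: "d s c = Suc m" by (cases "d s c") auto
    obtain a where a: "E a c" "a \<in> V" "d s a = m" "(adjW E {w\<in>V. w = a \<or> d s w < m})\<^sup>*\<^sup>* s a"
      using pred[OF sV cV m] by blast
    have sub: "{w\<in>V. w = a \<or> d s w < m} \<subseteq> V - {c}" using Ene[OF a(1)] m by auto
    have sa: "(adjW E (V - {c}))\<^sup>*\<^sup>* a s" using rtr_sym[OF adjW_mono[OF sub a(4)]] .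
    have aK: "a \<notin> K"
    proof
      assume "a \<in> K"
      then have "d s c \<le> d s a" using c(2) by blast
      then show False using a(3) m by simp
    qed
    have "\<not> is_clique V E (insert a K)"
    proof
      assume "is_clique V E (insert a K)"
      then have "insert a K = K" using K unfolding mc_def by blast
      then show False using aK by blast
    qed
    then obtain u v where uv: "u \<in> insert a K" "v \<in> insert a K" "u \<noteq> v" "\<not> E u v"
      unfolding is_clique_def using KV a(2) by blast
    obtain y where y: "y \<in> K" "y \<noteq> a" "\<not> E a y"
    proof (cases "u = a")
      case True
      then have "v \<in> K" using uv by auto
      then show ?thesis using that True uv by blast
    next
      case False
      then have uK: "u \<in> K" using uv by auto
      show ?thesis
      proof (cases "v = a")
        case True then show ?thesis using that uK uv Esym by blast
      next
        case False then show ?thesis using uK uv clique_E[OF Kc] by auto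
      qed
    qed
    have yc: "y \<noteq> c" using y(3) a(1) by blast
    have n: "\<not> (adjW E (V - {c}))\<^sup>*\<^sup>* a y"
      using L1[OF Esym[OF a(1)] clique_E[OF Kc c(1) y(1) yc[symmetric]] y(2)[symmetric] y(3)] .
    show ?thesis
    proof (rule bexI[OF _ c(1)])
      show "s \<notin> D c"
      proof
        assume sD: "s \<in> D c"
        have "y \<in> D c" using sink[OF c(1)] y(1) yc by blast
        then have "(adjW E (V - {c}))\<^sup>*\<^sup>* s y" using D_conn[OF sD] by blast
        then show False using n rtr_trans[OF sa] by blast
      qed
    qed
  qed
  define f where "f s = (if s \<in> K then s else (SOME c. c \<in> K \<and> s \<notin> D c))" for s
  have f1: "f s \<in> K \<and> (s \<notin> K \<longrightarrow> s \<notin> D (f s))" if "s \<in> S" for s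
  proof (cases "s \<in> K")
    case True then show ?thesis unfolding f_def by simp
  next
    case False
    then have "\<exists>c. c \<in> K \<and> s \<notin> D c" using fmap[OF that] by blast
    then have "(SOME c. c \<in> K \<and> s \<notin> D c) \<in> K \<and> s \<notin> D (SOME c. c \<in> K \<and> s \<notin> D c)"
      by (rule someI_ex)
    then show ?thesis unfolding f_def using False by simp
  qed
  have inj: "inj_on f S"
  proof (rule inj_onI)
    fix s t assume st: "s \<in> S" "t \<in> S" "f s = f t"
    have fsK: "f s \<in> K" using f1[OF st(1)] by blast
    have fV: "f s \<in> V" using fsK KV by blast
    have ns: "s \<notin> D (f s)"
    proof (cases "s \<in> K")
      case True then show ?thesis unfolding f_def using D_notx KV by auto
    next
      case False then show ?thesis using f1[OF st(1)] by blast
    qed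
    have nt: "t \<notin> D (f s)"
    proof (cases "t \<in> K")
      case True then show ?thesis using st(3) unfolding f_def using D_notx KV by auto
    next
      case False then show ?thesis using f1[OF st(2)] st(3) by simp
    qed
    show "s = t" using D_out[OF fV st(1,2) ns nt] .
  qed
  have "f ` S \<subseteq> K" using f1 by blast
  then have "card S \<le> card K" using card_inj_on_le[OF inj _ finK] by blast
  then show ?thesis using Kc by blast
qed

end


lemma (in bg) small_bound:
  assumes SV: "S \<subseteq> V" and c2: "card S \<le> 2" and K0c: "is_clique V E K0"
    and maxc: "\<And>K'. is_clique V E K' \<Longrightarrow> card K' \<le> card K0"
  shows "card S \<le> card K0"
proof -
  obtain v where v: "v \<in> V" using Vne by blast
  have "is_clique V E {v}" unfolding is_clique_def using v by simp
  then have one: "1 \<le> card K0" using maxc by fastforce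
  show ?thesis
  proof (cases "card S \<le> 1")
    case True then show ?thesis using one by simp
  next
    case False
    then have "card S = 2" using c2 by simp
    then obtain s t where st: "S = {s, t}" "s \<noteq> t" by (meson card_2_iff)
    have sV: "s \<in> V" and tV: "t \<in> V" using st SV by auto
    have "d s t \<noteq> 0" using d_0[OF sV tV] st(2) by blast
    then obtain m where m: "d s t = Suc m" by (cases "d s t") auto
    have "(adjW E V ^^ Suc m) s t" using d_rel[OF sV tV] m by simp
    then obtain y where y: "adjW E V s y" by (rule relpowp_Suc_E2)
    then have Esy: "E s y" unfolding adjW_def by simp
    have "is_clique V E {s, y}" unfolding is_clique_def using Esy Esym EV1 EV2 by blast
    then have "card {s, y} \<le> card K0" by (rule maxc)
    moreover have "card {s, y} = 2" using Ene[OF Esy] by simp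
    ultimately show ?thesis using \<open>card S = 2\<close> by simp
  qed
qed

theorem theorem2p2:
  fixes V :: "'a set" and E :: "'a \<Rightarrow> 'a \<Rightarrow> bool"
  assumes "block_graph V E"
  shows "mob V E = clique_number V E"
proof -
  have cgr: "connected_graph V E" using assms unfolding block_graph_def by simp
  interpret bg V E
    by unfold_locales (use assms cgr in \<open>auto simp: block_graph_def\<close>)
  let ?CS = "{card K | K. is_clique V E K}"
  have fPV: "finite (card ` Pow V)" using finV by simp
  have "?CS \<subseteq> card ` Pow V" unfolding is_clique_def by auto
  then have fCS: "finite ?CS" using fPV finite_subset by blast
  have "is_clique V E {}" unfolding is_clique_def by simp
  then have "card ({}::'a set) \<in> ?CS" by blast
  then have neCS: "?CS \<noteq> {}" by blast
  have "clique_number V E \<in> ?CS" unfolding clique_number_def using Max_in[OF fCS neCS] .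
  then have "\<exists>K0. clique_number V E = card K0 \<and> is_clique V E K0" by simp
  then obtain K0 where K0: "is_clique V E K0" "card K0 = clique_number V E" by metis
  have maxc: "card K' \<le> card K0" if "is_clique V E K'" for K'
  proof -
    have "card K' \<in> ?CS" using that by blast
    then show ?thesis using Max_ge[OF fCS] K0(2) unfolding clique_number_def by simp
  qed
  have mK0: "mobile_gp_set V E K0" using clique_mobile[OF K0(1) maxc] by blast
  have ub: "card S \<le> card K0" if mS: "mobile_gp_set V E S" for S
  proof -
    have gS: "gp_set V E S" using mS unfolding mobile_gp_set_def by simp
    have SV: "S \<subseteq> V" using gp_V[OF gS] .
    show ?thesis
    proof (cases "3 \<le> card S")
      case True
      have "\<forall>x\<in>V. \<exists>z. z \<in> V \<and> z \<noteq> x \<and> Inv x z S" using mobile_P[OF mS True] by blast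
      then obtain K where "is_clique V E K" "card S \<le> card K" using static[OF SV True] by blast
      then show ?thesis using maxc by (meson le_trans)
    next
      case False
      then show ?thesis using small_bound[OF SV _ K0(1) maxc] by simp
    qed
  qed
  let ?M = "{card S | S. mobile_gp_set V E S}"
  have "?M \<subseteq> card ` Pow V" unfolding mobile_gp_set_def gp_set_def by auto
  then have fM: "finite ?M" using fPV finite_subset by blast
  have "Max ?M = card K0"
  proof (rule Max_eqI[OF fM])
    fix y assume "y \<in> ?M"
    then show "y \<le> card K0" using ub by blast
  next
    show "card K0 \<in> ?M" using mK0 by blast
  qed
  then show ?thesis unfolding mob_def using K0(2) by simp
qed

end
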